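(* Let $v=v_0v_1\cdots$ be an aperiodic infinite word over $\{0,1\}$ with $h(\ell)$ the number of $1$'s among its first $\ell$ digits, and suppose $\liminf_{\ell\to\infty}h(\ell)/\ell>\ln2/\ln3$. Then the set $\{\Phi_{\mathbb{R}}(v_kv_{k+1}\cdots):k\ge0\}$ (the orbit of $\Phi_{\mathbb{R}}(v)$) is an infinite subset of $\mathbb{R}$ having at least one accumulation point in $\mathbb{R}$.
   Context: For an infinite $0$-$1$ word $w$ with $1$'s at positions $d_0<d_1<\cdots$, $\Phi_{\mathbb{R}}(w)$ is the real sum $-\sum_{i\ge0}2^{d_i}/3^{i+1}$, said to exist if the series converges (under the hypothesis, all $\Phi_{\mathbb{R}}(v_kv_{k+1}\cdots)$ exist). Aperiodic means not eventually periodic. *)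

theory Defs
  imports "HOL-Analysis.Analysis" "HOL-Library.Infinite_Set"
begin

text \<open>Infinite 0-1 words are modelled as functions nat => bool (True = digit 1).\<close>

definition ones_count :: "(nat \<Rightarrow> bool) \<Rightarrow> nat \<Rightarrow> nat" where
  "ones_count w l = card {j. j < l \<and> w j}"

definition shift_word :: "nat \<Rightarrow> (nat \<Rightarrow> bool) \<Rightarrow> (nat \<Rightarrow> bool)" where
  "shift_word k w = (\<lambda>n. w (k + n))"

definition eventually_periodic :: "(nat \<Rightarrow> bool) \<Rightarrow> bool" where
  "eventually_periodic w \<longleftrightarrow> (\<exists>p>0. \<exists>N. \<forall>n\<ge>N. w (n + p) = w n)"

text \<open>Positions of the 1's, d_0 < d_1 < ... (meaningful when there are infinitely many 1's).\<close>
definition one_pos :: "(nat \<Rightarrow> bool) \<Rightarrow> nat \<Rightarrow> nat" where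
  "one_pos w i = enumerate {n. w n} i"

definition Phi_term :: "(nat \<Rightarrow> bool) \<Rightarrow> nat \<Rightarrow> real" where
  "Phi_term w i = - (2 ^ one_pos w i / 3 ^ (i + 1))"

definition Phi_exists :: "(nat \<Rightarrow> bool) \<Rightarrow> bool" where
  "Phi_exists w \<longleftrightarrow> infinite {n. w n} \<and> summable (Phi_term w)"

definition Phi_R :: "(nat \<Rightarrow> bool) \<Rightarrow> real" where
  "Phi_R w = (\<Sum>i. Phi_term w i)"

end

theory Submission
  imports Defs
begin


lemma enum_unique:
  fixes f :: "nat \<Rightarrow> nat"
  assumes sm: "strict_mono f" and rg: "range f = S"
  shows "enumerate S n = f n"
proof -
  have "inj f" using sm by (rule strict_mono_imp_inj_on)
  then have "infinite (range f)" by (rule range_inj_infinite)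
  then have inf: "infinite S" using rg by simp
  show ?thesis
  proof (induction n)
    case 0
    show ?case unfolding enumerate_0
    proof (rule Least_equality)
      show "f 0 \<in> S" using rg by blast
      fix y assume "y \<in> S"
      then obtain m where "y = f m" using rg by blast
      then show "f 0 \<le> y" using sm by (simp add: strict_mono_less_eq)
    qed
  next
    case (Suc n)
    show ?case unfolding enumerate_Suc''[OF inf] Suc
    proof (rule Least_equality)
      have "f n < f (Suc n)" using sm by (simp add: strict_mono_less)
      moreover have "f (Suc n) \<in> S" using rg by blast
      ultimately show "f (Suc n) \<in> S \<and> f n < f (Suc n)" by blast
      fix y assume y: "y \<in> S \<and> f n < y"
      then obtain m where m: "y = f m" using rg by blast
      then have "n < m" using y sm by (simp add: strict_mono_less)
      then have "Suc n \<le> m" by simp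
      then show "f (Suc n) \<le> y" using sm m by (simp add: strict_mono_less_eq)
    qed
  qed
qed

lemma infinite_shift:
  assumes "infinite {n. v n}"
  shows "infinite {n. shift_word k v n}"
proof
  assume fin: "finite {n. shift_word k v n}"
  have sub: "{n. v n} \<subseteq> {..<k} \<union> (\<lambda>n. k + n) ` {n. shift_word k v n}"
  proof
    fix n assume n: "n \<in> {n. v n}"
    show "n \<in> {..<k} \<union> (\<lambda>n. k + n) ` {n. shift_word k v n}"
    proof (cases "n < k")
      case True then show ?thesis by simp
    next
      case False
      then have e: "n = k + (n - k)" by simp
      then have "shift_word k v (n - k)" using n unfolding shift_word_def by simp
      then have "n - k \<in> {n. shift_word k v n}" by simp
      then have "k + (n - k) \<in> (\<lambda>n. k + n) ` {n. shift_word k v n}" by (rule imageI)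
      then show ?thesis using e by simp
    qed
  qed
  have "finite ({..<k} \<union> (\<lambda>n. k + n) ` {n. shift_word k v n})" using fin by simp
  then have "finite {n. v n}" using sub by (rule finite_subset[rotated])
  then show False using assms by simp
qed

lemma shift_Suc: "shift_word (Suc k) v n = shift_word k v (Suc n)"
  by (simp add: shift_word_def)

lemma one_pos_shift0:
  assumes "\<not> v k" "infinite {n. v n}"
  shows "one_pos (shift_word k v) i = Suc (one_pos (shift_word (Suc k) v) i)"
proof -
  let ?S = "{n. shift_word (Suc k) v n}"
  have inf: "infinite ?S" using infinite_shift assms(2) by blast
  have r: "range (enumerate ?S) = ?S" using range_enumerate[OF inf] .
  have "enumerate {n. shift_word k v n} i = (Suc \<circ> enumerate ?S) i"
  proof (rule enum_unique)
    show "strict_mono (Suc \<circ> enumerate ?S)"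
      using strict_mono_enumerate[OF inf] by (simp add: strict_mono_def)
    show "range (Suc \<circ> enumerate ?S) = {n. shift_word k v n}"
    proof
      show "range (Suc \<circ> enumerate ?S) \<subseteq> {n. shift_word k v n}"
      proof
        fix y assume "y \<in> range (Suc \<circ> enumerate ?S)"
        then obtain j where y: "y = Suc (enumerate ?S j)" by auto
        have "enumerate ?S j \<in> ?S" using enumerate_in_set[OF inf] .
        then show "y \<in> {n. shift_word k v n}" using y by (simp add: shift_Suc)
      qed
      show "{n. shift_word k v n} \<subseteq> range (Suc \<circ> enumerate ?S)"
      proof
        fix n assume n: "n \<in> {n. shift_word k v n}"
        have "n \<noteq> 0" using n assms(1) unfolding shift_word_def by (cases n) auto
        then obtain m where m: "n = Suc m" using not0_implies_Suc by blast
        then have "m \<in> ?S" using n by (simp add: shift_Suc)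
        then have "m \<in> range (enumerate ?S)" using r by simp
        then obtain j where "m = enumerate ?S j" by blast
        then have "n = (Suc \<circ> enumerate ?S) j" using m by simp
        then show "n \<in> range (Suc \<circ> enumerate ?S)" by blast
      qed
    qed
  qed
  then show ?thesis by (simp add: one_pos_def)
qed

lemma one_pos_shift1:
  assumes "v k" "infinite {n. v n}"
  shows "one_pos (shift_word k v) 0 = 0"
    "one_pos (shift_word k v) (Suc i) = Suc (one_pos (shift_word (Suc k) v) i)"
proof -
  let ?S = "{n. shift_word (Suc k) v n}"
  let ?f = "\<lambda>i. case i of 0 \<Rightarrow> 0 | Suc j \<Rightarrow> Suc (enumerate ?S j)"
  have inf: "infinite ?S" using infinite_shift assms(2) by blast
  have r: "range (enumerate ?S) = ?S" using range_enumerate[OF inf] .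
  have e: "enumerate {n. shift_word k v n} j = ?f j" for j
  proof (rule enum_unique)
    have "?f n < ?f (Suc n)" for n
    proof (cases n)
      case 0 then show ?thesis by simp
    next
      case (Suc m)
      have "enumerate ?S m < enumerate ?S (Suc m)" by (rule enumerate_step[OF inf])
      then show ?thesis using Suc by simp
    qed
    then show "strict_mono ?f" by (rule strict_monoI_Suc)
    show "range ?f = {n. shift_word k v n}"
    proof
      show "range ?f \<subseteq> {n. shift_word k v n}"
      proof
        fix y assume "y \<in> range ?f"
        then obtain j where y: "y = ?f j" by blast
        show "y \<in> {n. shift_word k v n}"
        proof (cases j)
          case 0 then show ?thesis using y assms(1) by (simp add: shift_word_def)
        next
          case (Suc j')
          have "shift_word (Suc k) v (enumerate ?S j')" using enumerate_in_set[OF inf] by blast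
          then have "shift_word k v (Suc (enumerate ?S j'))" by (simp only: shift_Suc)
          then show ?thesis using y Suc by simp
        qed
      qed
      show "{n. shift_word k v n} \<subseteq> range ?f"
      proof
        fix n assume n: "n \<in> {n. shift_word k v n}"
        show "n \<in> range ?f"
        proof (cases n)
          case 0
          then have "n = ?f 0" by simp
          then show ?thesis by blast
        next
          case (Suc m)
          then have "m \<in> ?S" using n by (simp add: shift_Suc)
          then have "m \<in> range (enumerate ?S)" using r by simp
          then obtain j where "m = enumerate ?S j" by blast
          then have "n = ?f (Suc j)" using Suc by simp
          then show ?thesis by blast
        qed
      qed
    qed
  qed
  show "one_pos (shift_word k v) 0 = 0" using e[of 0] by (simp add: one_pos_def)
  show "one_pos (shift_word k v) (Suc i) = Suc (one_pos (shift_word (Suc k) v) i)"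
    using e[of "Suc i"] by (simp add: one_pos_def)
qed

lemma term0:
  assumes "\<not> v k" "infinite {n. v n}"
  shows "Phi_term (shift_word k v) i = 2 * Phi_term (shift_word (Suc k) v) i"
  unfolding Phi_term_def one_pos_shift0[OF assms] by simp

lemma term1:
  assumes "v k" "infinite {n. v n}"
  shows "Phi_term (shift_word k v) 0 = - 1/3"
    "Phi_term (shift_word k v) (Suc i) = 2/3 * Phi_term (shift_word (Suc k) v) i"
  unfolding Phi_term_def one_pos_shift1[OF assms] by simp_all

lemma summ_step:
  assumes "infinite {n. v n}"
  shows "summable (Phi_term (shift_word k v)) \<longleftrightarrow> summable (Phi_term (shift_word (Suc k) v))"
proof (cases "v k")
  case True
  have "summable (Phi_term (shift_word k v)) \<longleftrightarrow> summable (\<lambda>i. Phi_term (shift_word k v) (Suc i))"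
    by (rule summable_Suc_iff[symmetric])
  also have "\<dots> \<longleftrightarrow> summable (\<lambda>i. 2/3 * Phi_term (shift_word (Suc k) v) i)"
    by (simp only: term1(2)[OF True assms])
  also have "\<dots> \<longleftrightarrow> summable (Phi_term (shift_word (Suc k) v))"
    by (simp add: summable_cmult_iff)
  finally show ?thesis .
next
  case False
  have e: "Phi_term (shift_word k v) = (\<lambda>i. 2 * Phi_term (shift_word (Suc k) v) i)"
    by (rule ext) (rule term0[OF False assms])
  have "summable (Phi_term (shift_word k v)) \<longleftrightarrow> summable (\<lambda>i. 2 * Phi_term (shift_word (Suc k) v) i)"
    by (simp only: e)
  also have "\<dots> \<longleftrightarrow> summable (Phi_term (shift_word (Suc k) v))"
    by (simp add: summable_cmult_iff)
  finally show ?thesis .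
qed

lemma phi_step0:
  assumes "\<not> v k" "infinite {n. v n}" "summable (Phi_term (shift_word (Suc k) v))"
  shows "Phi_R (shift_word k v) = 2 * Phi_R (shift_word (Suc k) v)"
  unfolding Phi_R_def term0[OF assms(1,2)] using suminf_mult[OF assms(3)] by simp

lemma phi_step1:
  assumes "v k" "infinite {n. v n}" "summable (Phi_term (shift_word (Suc k) v))"
  shows "3 * Phi_R (shift_word k v) = 2 * Phi_R (shift_word (Suc k) v) - 1"
proof -
  have s: "summable (Phi_term (shift_word k v))" using summ_step assms by blast
  have "(\<Sum>i. Phi_term (shift_word k v) (Suc i)) = Phi_R (shift_word k v) - Phi_term (shift_word k v) 0"
    unfolding Phi_R_def by (rule suminf_split_head[OF s])
  moreover have "(\<Sum>i. Phi_term (shift_word k v) (Suc i)) = 2/3 * Phi_R (shift_word (Suc k) v)"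
    unfolding Phi_R_def term1(2)[OF assms(1,2)] by (rule suminf_mult[OF assms(3)])
  ultimately show ?thesis using term1(1)[OF assms(1,2)] by simp
qed

lemma ones_count_Suc:
  "ones_count w (Suc l) = ones_count w l + (if w l then 1 else 0)"
proof -
  have "{j. j < Suc l \<and> w j} = {j. j < l \<and> w j} \<union> (if w l then {l} else {})"
    by (auto simp: less_Suc_eq)
  then show ?thesis unfolding ones_count_def by (auto simp: card_insert_if)
qed

lemma ones_count_0: "ones_count w 0 = 0"
  by (simp add: ones_count_def)

lemma ones_count_shift:
  "ones_count (shift_word k v) l + ones_count v k = ones_count v (k + l)"
  by (induction l) (auto simp: ones_count_Suc shift_word_def ones_count_0)

lemma ones_count_le: "ones_count w l \<le> l"
  unfolding ones_count_def
  by (metis (no_types, lifting) card_lessThan card_mono finite_lessThan lessThan_iff mem_Collect_eq subsetI)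

lemma ones_count_pos:
  assumes "infinite {n. w n}"
  shows "ones_count w (Suc (one_pos w i)) = Suc i"
proof -
  let ?S = "{n. w n}"
  have "{j. j < Suc (enumerate ?S i) \<and> w j} = enumerate ?S ` {..i}"
  proof
    show "{j. j < Suc (enumerate ?S i) \<and> w j} \<subseteq> enumerate ?S ` {..i}"
    proof
      fix j assume j: "j \<in> {j. j < Suc (enumerate ?S i) \<and> w j}"
      then obtain m where m: "enumerate ?S m = j" using enumerate_Ex[OF assms] by auto
      have "enumerate ?S m \<le> enumerate ?S i" using j m by simp
      then have "m \<le> i" using enumerate_mono_le_iff[OF assms] by blast
      then show "j \<in> enumerate ?S ` {..i}" using m by auto
    qed
    show "enumerate ?S ` {..i} \<subseteq> {j. j < Suc (enumerate ?S i) \<and> w j}"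
      using enumerate_in_set[OF assms] enumerate_mono_le_iff[OF assms] by (auto simp: less_Suc_eq_le)
  qed
  moreover have "card (enumerate ?S ` {..i}) = Suc i"
    using card_image[OF inj_on_subset[OF inj_enumerate[OF assms] subset_UNIV]] by simp
  ultimately show ?thesis unfolding ones_count_def one_pos_def by simp
qed


lemma r_bounds:
  fixes c :: real
  assumes c: "ln 2 / ln 3 < c"
  shows "0 < c" "0 < 2 powr (1/c) / 3" "2 powr (1/c) / 3 < 1"
proof -
  have l3: "0 < ln (3::real)" by simp
  have l2: "0 < ln (2::real)" by simp
  have "0 < ln 2 / ln (3::real)" using l2 l3 by simp
  then show c0: "0 < c" using c by linarith
  show "0 < 2 powr (1/c) / 3" by simp
  have "ln 2 < c * ln 3" using c l3 by (simp add: divide_less_eq mult.commute)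
  then have "ln 2 / c < ln 3" using c0 by (simp add: divide_less_eq mult.commute)
  then have "exp (ln 2 / c) < exp (ln 3)" by (simp only: exp_less_cancel_iff)
  then have "exp (ln 2 / c) < 3" by simp
  moreover have "2 powr (1/c) = exp (ln 2 / c)" by (simp add: powr_def)
  ultimately have "2 powr (1/c) < 3" by simp
  then show "2 powr (1/c) / 3 < 1" by simp
qed

lemma good_word:
  fixes w and c :: real
  assumes c: "ln 2 / ln 3 < c" and h: "\<forall>l. c * real l \<le> real (ones_count w l)"
  shows "infinite {n. w n}" "summable (Phi_term w)" "\<bar>Phi_R w\<bar> \<le> 1/(1 - 2 powr (1/c) / 3)"
proof -
  define r where "r = 2 powr (1/c) / 3"
  have c0: "0 < c" and r0: "0 < r" and r1: "r < 1" using r_bounds[OF c] unfolding r_def by auto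
  show inf: "infinite {n. w n}"
  proof
    assume fin: "finite {n. w n}"
    define l where "l = nat (ceiling ((real (card {n. w n}) + 1) / c))"
    have "(real (card {n. w n}) + 1) / c \<le> real l" unfolding l_def by linarith
    then have "real (card {n. w n}) + 1 \<le> c * real l" using c0 by (simp add: divide_le_eq mult.commute)
    moreover have "ones_count w l \<le> card {n. w n}"
      unfolding ones_count_def using fin by (intro card_mono) auto
    then have "real (ones_count w l) \<le> real (card {n. w n})" by simp
    moreover have "c * real l \<le> real (ones_count w l)" using h by blast
    ultimately show False by linarith
  qed
  have bnd: "\<bar>Phi_term w i\<bar> \<le> r ^ i" for i
  proof -
    define d where "d = one_pos w i"
    have "c * real (Suc d) \<le> real (ones_count w (Suc d))" using h by blast
    also have "\<dots> = real (Suc i)" using ones_count_pos[OF inf, of i] unfolding d_def by simp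
    finally have "c * real (Suc d) \<le> real (Suc i)" .
    then have "c * real d \<le> real (Suc i)" using c0 by (simp add: algebra_simps)
    then have dle: "real d \<le> real (Suc i) / c" using c0 by (simp add: le_divide_eq mult.commute)
    have "(2::real) ^ d = 2 powr real d" by (simp add: powr_realpow)
    also have "\<dots> \<le> 2 powr (real (Suc i) / c)" using dle by (intro powr_mono) auto
    also have "\<dots> = (2 powr (1/c)) powr real (Suc i)" by (simp add: powr_powr)
    also have "\<dots> = (2 powr (1/c)) ^ Suc i" by (rule powr_realpow) simp
    finally have "(2::real) ^ d / 3 ^ Suc i \<le> (2 powr (1/c)) ^ Suc i / 3 ^ Suc i"
      by (simp add: divide_right_mono)
    also have "\<dots> = r ^ Suc i" unfolding r_def by (simp add: power_divide)
    also have "\<dots> \<le> r ^ i" using r0 r1 by (simp add: mult_left_le_one_le)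
    finally show ?thesis unfolding Phi_term_def d_def by simp
  qed
  have gs: "summable (\<lambda>i. r ^ i)" using r0 r1 by (simp add: summable_geometric)
  have sa: "summable (\<lambda>i. \<bar>Phi_term w i\<bar>)"
    by (rule summable_comparison_test[OF _ gs]) (use bnd in auto)
  show "summable (Phi_term w)" using sa summable_rabs_cancel by blast
  have "\<bar>Phi_R w\<bar> \<le> (\<Sum>i. \<bar>Phi_term w i\<bar>)" unfolding Phi_R_def by (rule summable_rabs[OF sa])
  also have "\<dots> \<le> (\<Sum>i. r ^ i)" by (rule suminf_le[OF bnd sa gs])
  also have "\<dots> = 1 / (1 - r)" using r0 r1 by (simp add: suminf_geometric)
  finally show "\<bar>Phi_R w\<bar> \<le> 1/(1 - 2 powr (1/c) / 3)" unfolding r_def .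
qed


lemma window:
  assumes inf: "infinite {n. v n}" and S: "\<forall>k. summable (Phi_term (shift_word k v))"
  shows "\<exists>H (B::int). 3^H * Phi_R (shift_word m v) = 2^n * Phi_R (shift_word (m+n) v) + B
            \<and> (0 < n \<longrightarrow> (odd B \<longleftrightarrow> v m))"
proof (induction n arbitrary: m)
  case 0
  show ?case by (rule exI[of _ 0], rule exI[of _ 0]) simp
next
  case (Suc n)
  obtain H :: nat and B :: int where HB: "3^H * Phi_R (shift_word (Suc m) v) = 2^n * Phi_R (shift_word (Suc m+n) v) + real_of_int B"
    using Suc.IH[of "Suc m"] by blast
  have e: "m + Suc n = Suc m + n" by simp
  show ?case
  proof (cases "v m")
    case True
    have st: "3 * Phi_R (shift_word m v) = 2 * Phi_R (shift_word (Suc m) v) - 1"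
      using phi_step1[OF True inf] S by blast
    have "3^(Suc H) * Phi_R (shift_word m v) = 3^H * (2 * Phi_R (shift_word (Suc m) v) - 1)"
      using st by simp
    also have "\<dots> = 2^(Suc n) * Phi_R (shift_word (m + Suc n) v) + real_of_int (2*B - 3^H)"
      using HB unfolding e by (simp add: algebra_simps)
    finally show ?thesis using True by (intro exI[of _ "Suc H"] exI[of _ "2*B - 3^H"]) simp
  next
    case False
    have st: "Phi_R (shift_word m v) = 2 * Phi_R (shift_word (Suc m) v)"
      using phi_step0[OF False inf] S by blast
    have "3^H * Phi_R (shift_word m v) = 2^(Suc n) * Phi_R (shift_word (m + Suc n) v) + real_of_int (2*B)"
      using HB st unfolding e by (simp add: algebra_simps)
    then show ?thesis using False by (intro exI[of _ H] exI[of _ "2*B"]) simp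
  qed
qed

definition oddrep :: "real \<Rightarrow> bool \<Rightarrow> bool" where
  "oddrep y b \<longleftrightarrow> (\<exists>N D::int. odd D \<and> y = real_of_int N / real_of_int D \<and> (odd N \<longleftrightarrow> b))"

lemma oddrep_uniq:
  assumes "oddrep y b1" "oddrep y b2" shows "b1 = b2"
proof -
  obtain N1 D1 where 1: "odd D1" "y = real_of_int N1 / real_of_int D1" "odd N1 \<longleftrightarrow> b1"
    using assms(1) unfolding oddrep_def by blast
  obtain N2 D2 where 2: "odd D2" "y = real_of_int N2 / real_of_int D2" "odd N2 \<longleftrightarrow> b2"
    using assms(2) unfolding oddrep_def by blast
  have d1: "real_of_int D1 \<noteq> 0" and d2: "real_of_int D2 \<noteq> 0" using 1(1) 2(1) by auto
  have "real_of_int N1 * real_of_int D2 = real_of_int N2 * real_of_int D1"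
    using 1(2) 2(2) d1 d2 by (simp add: field_simps)
  then have e: "N1 * D2 = N2 * D1" by (simp only: of_int_mult[symmetric] of_int_eq_iff)
  have "odd (N1 * D2) \<longleftrightarrow> odd N1" using 2(1) by simp
  moreover have "odd (N2 * D1) \<longleftrightarrow> odd N2" using 1(1) by simp
  ultimately have "odd N1 \<longleftrightarrow> odd N2" using e by simp
  then show ?thesis using 1(3) 2(3) by blast
qed

lemma periodic_from_repeat:
  assumes inf: "infinite {n. v n}" and S: "\<forall>k. summable (Phi_term (shift_word k v))"
    and K: "infinite K" and Ks: "\<forall>k\<in>K. Phi_R (shift_word k v) = s"
  shows "eventually_periodic v"
proof -
  define x where "x m = Phi_R (shift_word m v)" for m
  obtain k1 where k1: "k1 \<in> K" using infinite_imp_nonempty[OF K] by blast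
  obtain k2 where k2: "k2 \<in> K" "k1 < k2" using K unfolding infinite_nat_iff_unbounded by blast
  have "\<exists>H (B::int). 3^H * x k1 = 2^(k2-k1) * x (k1 + (k2-k1)) + real_of_int B
            \<and> (0 < k2 - k1 \<longrightarrow> (odd B \<longleftrightarrow> v k1))"
    using window[OF inf S, of k1 "k2-k1"] unfolding x_def .
  then obtain H0 and B0 :: int where HB0: "3^H0 * x k1 = 2^(k2-k1) * x (k1 + (k2-k1)) + real_of_int B0"
    by (elim exE conjE)
  define D0 :: int where "D0 = 3^H0 - 2^(k2-k1)"
  have D0odd: "odd D0" unfolding D0_def using k2(2) by simp
  then have D0nz: "real_of_int D0 \<noteq> 0" by auto
  have xk1: "x k1 = s" "x k2 = s" using Ks k1 k2 unfolding x_def by auto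
  have D0r: "real_of_int D0 = 3^H0 - 2^(k2-k1)" unfolding D0_def by simp
  have "k1 + (k2 - k1) = k2" using k2(2) by simp
  then have "3^H0 * s = 2^(k2-k1) * s + real_of_int B0" using HB0 xk1 by simp
  then have sD: "s * real_of_int D0 = real_of_int B0" unfolding D0r by (simp add: algebra_simps)
  have rep: "oddrep (x m) (v m)" if "k1 \<le> m" for m
  proof -
    obtain k where k: "k \<in> K" "m < k" using K unfolding infinite_nat_iff_unbounded by blast
    have "\<exists>H (B::int). 3^H * x m = 2^(k-m) * x (m + (k-m)) + real_of_int B
            \<and> (0 < k - m \<longrightarrow> (odd B \<longleftrightarrow> v m))"
      using window[OF inf S, of m "k-m"] unfolding x_def .
    then obtain H and B :: int where HB: "3^H * x m = 2^(k-m) * x (m + (k-m)) + real_of_int B"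
      and par: "0 < k - m \<longrightarrow> (odd B \<longleftrightarrow> v m)" by (elim exE conjE)
    have xk: "x (m + (k-m)) = s" using k Ks unfolding x_def by simp
    have e1: "3^H * x m = 2^(k-m) * s + real_of_int B" using HB xk by simp
    have "(3^H * x m) * real_of_int D0 = 2^(k-m) * (s * real_of_int D0) + real_of_int B * real_of_int D0"
      unfolding e1 by (simp add: algebra_simps)
    then have "x m * (3^H * real_of_int D0) = 2^(k-m) * real_of_int B0 + real_of_int B * real_of_int D0"
      unfolding sD by (simp add: algebra_simps)
    moreover have "3^H * real_of_int D0 \<noteq> 0" using D0nz by simp
    ultimately have "x m = (2^(k-m) * real_of_int B0 + real_of_int B * real_of_int D0) / (3^H * real_of_int D0)"
      by (simp add: eq_divide_eq)
    then have "x m = real_of_int (2^(k-m) * B0 + B * D0) / real_of_int (3^H * D0)"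
      by simp
    moreover have "odd (3^H * D0)" using D0odd by simp
    moreover have "odd (2^(k-m) * B0 + B * D0) \<longleftrightarrow> v m" using par k(2) D0odd by simp
    ultimately show ?thesis unfolding oddrep_def by blast
  qed
  have stp: "x (Suc m) = (if v m then (3 * x m + 1) / 2 else x m / 2)" for m
  proof (cases "v m")
    case True
    have "3 * x m = 2 * x (Suc m) - 1" using phi_step1[OF True inf spec[OF S, of "Suc m"]] unfolding x_def .
    then show ?thesis using True by simp
  next
    case False
    have "x m = 2 * x (Suc m)" using phi_step0[OF False inf spec[OF S, of "Suc m"]] unfolding x_def .
    then show ?thesis using False by simp
  qed
  have main: "x (k1 + t) = x (k2 + t) \<and> v (k1 + t) = v (k2 + t)" for t
  proof (induction t)
    case 0
    have "x k1 = x k2" using xk1 by simp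
    moreover have "v k1 = v k2"
    proof -
      have r1: "oddrep (x k1) (v k1)" using rep[of k1] by simp
      have "oddrep (x k2) (v k2)" using rep[of k2] k2(2) by simp
      then have r2: "oddrep (x k1) (v k2)" using \<open>x k1 = x k2\<close> by simp
      show ?thesis by (rule oddrep_uniq[OF r1 r2])
    qed
    ultimately show ?case by simp
  next
    case (Suc t)
    have "x (k1 + Suc t) = x (k2 + Suc t)" using Suc stp[of "k1 + t"] stp[of "k2 + t"] by simp
    moreover have "v (k1 + Suc t) = v (k2 + Suc t)"
    proof -
      have r1: "oddrep (x (k1 + Suc t)) (v (k1 + Suc t))" using rep[of "k1 + Suc t"] by simp
      have "oddrep (x (k2 + Suc t)) (v (k2 + Suc t))" using rep[of "k2 + Suc t"] k2(2) by simp
      then have r2: "oddrep (x (k1 + Suc t)) (v (k2 + Suc t))"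
        using \<open>x (k1 + Suc t) = x (k2 + Suc t)\<close> by simp
      show ?thesis by (rule oddrep_uniq[OF r1 r2])
    qed
    ultimately show ?case by simp
  qed
  have per: "v (n + (k2 - k1)) = v n" if "k1 \<le> n" for n
  proof -
    from le_Suc_ex[OF that] obtain t where "n = k1 + t" by blast
    have e: "n + (k2 - k1) = k2 + t" using \<open>n = k1 + t\<close> k2(2) by simp
    have "v (n + (k2 - k1)) = v (k2 + t)" by (simp only: e)
    also have "\<dots> = v (k1 + t)" using main[of t] by simp
    also have "\<dots> = v n" using \<open>n = k1 + t\<close> by simp
    finally show ?thesis .
  qed
  have p0: "0 < k2 - k1" using k2 by simp
  have "\<forall>n\<ge>k1. v (n + (k2 - k1)) = v n" using per by blast
  then have "\<exists>N. \<forall>n\<ge>N. v (n + (k2 - k1)) = v n" by (rule exI)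
  with p0 show ?thesis unfolding eventually_periodic_def by blast
qed


lemma good_exists:
  fixes v :: "nat \<Rightarrow> bool"
  assumes lim: "liminf (\<lambda>l. ereal (real (ones_count v l) / real l)) > ereal (ln 2 / ln 3)"
  shows "\<exists>c>ln 2 / ln 3. \<forall>N. \<exists>k\<ge>N. \<forall>l. c * real l \<le> real (ones_count (shift_word k v) l)"
proof -
  define \<alpha> :: real where "\<alpha> = ln 2 / ln 3"
  obtain c1 where c1: "ereal \<alpha> < ereal c1" "ereal c1 < liminf (\<lambda>l. ereal (real (ones_count v l) / real l))"
    using ereal_dense2[OF lim[folded \<alpha>_def]] by blast
  have ac1: "\<alpha> < c1" using c1(1) by simp
  have "eventually (\<lambda>l. ereal (real (ones_count v l) / real l) > ereal c1) sequentially"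
    by (rule less_LiminfD[OF c1(2)])
  then obtain L where L: "\<And>l. l \<ge> L \<Longrightarrow> real (ones_count v l) / real l > c1"
    unfolding eventually_sequentially by auto
  define c where "c = (\<alpha> + c1) / 2"
  have a0: "0 < \<alpha>" unfolding \<alpha>_def by simp
  have cc: "\<alpha> < c" "c < c1" "0 < c" using ac1 a0 unfolding c_def by auto
  define f where "f l = real (ones_count v l) - c * real l" for l
  have fgrow: "f l \<ge> (c1 - c) * real l" if "l \<ge> L" "l \<ge> 1" for l
  proof -
    have "real (ones_count v l) / real l > c1" using L that by auto
    then have "real (ones_count v l) > c1 * real l" using that by (simp add: less_divide_eq)
    then show ?thesis unfolding f_def by (simp add: algebra_simps)
  qed
  have fle: "f l \<le> real l" for l
  proof -
    have "real (ones_count v l) \<le> real l" using ones_count_le[of v l] by simp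
    moreover have "0 \<le> c * real l" using cc by simp
    ultimately show ?thesis unfolding f_def by linarith
  qed
  have "\<forall>N. \<exists>k\<ge>N. \<forall>l. c * real l \<le> real (ones_count (shift_word k v) l)"
  proof
    fix N
    define M where "M = N + L + 1 + nat (ceiling (real N / (c1 - c)))"
    have M: "M \<ge> N" "M \<ge> L" "M \<ge> 1" unfolding M_def by auto
    have "real N / (c1 - c) \<le> real M" unfolding M_def by linarith
    then have MN: "real N \<le> (c1 - c) * real M" using cc by (simp add: divide_le_eq mult.commute)
    have fin: "finite (f ` {N..M})" "f ` {N..M} \<noteq> {}" using M by auto
    obtain k where k: "k \<in> {N..M}" "f k = Min (f ` {N..M})" using Min_in[OF fin] by auto
    have kmin: "f k \<le> f m" if "m \<ge> k" for m
    proof (cases "m \<le> M")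
      case True
      then have "m \<in> {N..M}" using k that by auto
      then show ?thesis using k Min_le[OF fin(1)] by auto
    next
      case False
      have "f k \<le> f N" using k Min_le[OF fin(1)] M by auto
      also have "\<dots> \<le> real N" by (rule fle)
      also have "\<dots> \<le> (c1 - c) * real M" by (rule MN)
      also have "\<dots> \<le> (c1 - c) * real m" using False cc by (intro mult_left_mono) auto
      also have "\<dots> \<le> f m" using fgrow False M by auto
      finally show ?thesis .
    qed
    have "\<forall>l. c * real l \<le> real (ones_count (shift_word k v) l)"
    proof
      fix l
      have "f k \<le> f (k + l)" by (rule kmin) simp
      moreover have "real (ones_count (shift_word k v) l) = real (ones_count v (k + l)) - real (ones_count v k)"
        using ones_count_shift[of k v l] by simp
      ultimately show "c * real l \<le> real (ones_count (shift_word k v) l)"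
        unfolding f_def by (simp add: algebra_simps)
    qed
    then show "\<exists>k\<ge>N. \<forall>l. c * real l \<le> real (ones_count (shift_word k v) l)" using k by auto
  qed
  then show ?thesis using cc unfolding \<alpha>_def by blast
qed

lemma summ_down:
  assumes "infinite {n. v n}" "summable (Phi_term (shift_word (k + d) v))"
  shows "summable (Phi_term (shift_word k v))"
  using assms(2)
proof (induction d arbitrary: k)
  case 0 then show ?case by simp
next
  case (Suc d)
  then have "summable (Phi_term (shift_word (Suc k) v))" by simp
  then show ?case using summ_step[OF assms(1)] by blast
qed

theorem lemma26:
  fixes v :: "nat \<Rightarrow> bool"
  assumes "\<not> eventually_periodic v"
    and "liminf (\<lambda>l. ereal (real (ones_count v l) / real l)) > ereal (ln 2 / ln 3)"
  shows "(\<forall>k. Phi_exists (shift_word k v))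
         \<and> infinite {Phi_R (shift_word k v) | k. True}
         \<and> (\<exists>x::real. x islimpt {Phi_R (shift_word k v) | k. True})"
proof -
  from good_exists[OF assms(2)] obtain c where c: "c > ln 2 / ln 3"
    and G: "\<forall>N. \<exists>k\<ge>N. \<forall>l. c * real l \<le> real (ones_count (shift_word k v) l)"
    by blast
  define G where "G = {k. \<forall>l. c * real l \<le> real (ones_count (shift_word k v) l)}"
  have Gex: "\<exists>k\<ge>N. k \<in> G" for N using spec[OF G, of N] unfolding G_def by simp
  obtain k0 where k0: "k0 \<in> G" using Gex[of 0] by blast
  have infs: "infinite {n. shift_word k0 v n}"
    using good_word(1)[OF c, of "shift_word k0 v"] k0 unfolding G_def by simp
  have inf: "infinite {n. v n}"
  proof
    assume "finite {n. v n}"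
    moreover have "(\<lambda>n. k0 + n) ` {n. shift_word k0 v n} \<subseteq> {n. v n}" by (auto simp: shift_word_def)
    ultimately have "finite ((\<lambda>n. k0 + n) ` {n. shift_word k0 v n})" by (rule rev_finite_subset)
    moreover have "inj_on (\<lambda>n. k0 + n) {n. shift_word k0 v n}" by (simp add: inj_on_def)
    ultimately have "finite {n. shift_word k0 v n}" by (rule finite_imageD)
    then show False using infs by simp
  qed
  have S: "\<forall>k. summable (Phi_term (shift_word k v))"
  proof
    fix k
    obtain k' where k': "k' \<ge> k" "k' \<in> G" using Gex[of k] by blast
    have s': "summable (Phi_term (shift_word k' v))"
      using good_word(2)[OF c, of "shift_word k' v"] k' unfolding G_def by simp
    have "k' = k + (k' - k)" using k' by simp
    then have "summable (Phi_term (shift_word (k + (k' - k)) v))" using s' by simp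
    then show "summable (Phi_term (shift_word k v))" by (rule summ_down[OF inf])
  qed
  have E: "\<forall>k. Phi_exists (shift_word k v)"
    unfolding Phi_exists_def using S infinite_shift[OF inf] by blast
  define x where "x k = Phi_R (shift_word k v)" for k
  define V where "V = x ` G"
  have orb: "{Phi_R (shift_word k v) | k. True} = range x" unfolding x_def by auto
  have VO: "V \<subseteq> range x" unfolding V_def by auto
  have Ginf: "infinite G"
    unfolding infinite_nat_iff_unbounded_le using Gex by blast
  have bV: "bounded V"
  proof -
    have "\<forall>y\<in>V. norm y \<le> 1/(1 - 2 powr (1/c) / 3)"
      unfolding V_def x_def G_def using good_word(3)[OF c] by auto
    then show ?thesis unfolding bounded_iff by blast
  qed
  have Vinf: "infinite V"
  proof
    assume "finite V"
    then obtain y where "infinite (x -` {y} \<inter> G)" using inf_img_fin_dom'[of x G] Ginf unfolding V_def by blast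
    moreover have "\<forall>k\<in>x -` {y} \<inter> G. Phi_R (shift_word k v) = y" unfolding x_def by auto
    ultimately have "eventually_periodic v" using periodic_from_repeat[OF inf S] by blast
    then show False using assms(1) by blast
  qed
  obtain z where "z islimpt V" using bounded_infinite_imp_islimpt[OF order_refl bV Vinf] by blast
  then have "z islimpt range x" using islimpt_subset VO by blast
  moreover have "infinite (range x)" using Vinf VO infinite_super by blast
  ultimately show ?thesis using E orb by auto
qed

end
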